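(* Let $m\ge0$ be an integer and write $s_n=s_n^{(1,m+2)}$. Then for all $n\ge0$, \[ s_{n+m+2}^2-1=\sum_{k=0}^n\left\{s_k^2+2\sum_{i=0}^k P_{k+m+1-i}^{\{-2,-1,m\}}s_i^2\right\}. \]
   Context: For positive integers $p<q$, $s_n^{(p,q)}$ is defined by $s_n^{(p,q)}=\delta_{0,n}+s_{n-p}^{(p,q)}+s_{n-q}^{(p,q)}$ for $n\ge0$ and $s_n^{(p,q)}=0$ for $n<0$. $\delta_{i,j}$ is $1$ if $i=j$ and $0$ otherwise. For a finite set $W$ of integers, $P_n^W$ is the number of permutations $\pi$ of $\{1,\dots,n\}$ with $\pi(i)-i\in W$ for all $i$ (the permanent of the $n\times n$ $(0,1)$ Toeplitz matrix whose $(i,j)$ entry is $1$ iff $j-i\in W$), with $P_0^W=1$. *)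

theory Defs
  imports Main "HOL-Combinatorics.Permutations"
begin

text \<open>The guard 0 < p only serves termination; the paper assumes 0 < p < q.\<close>
function s_seq :: "nat \<Rightarrow> nat \<Rightarrow> nat \<Rightarrow> nat" where
  "s_seq p q n =
     (if n = 0 then 1 else 0)
     + (if 0 < p \<and> p \<le> n then s_seq p q (n - p) else 0)
     + (if 0 < q \<and> q \<le> n then s_seq p q (n - q) else 0)"
  by auto
termination by (relation "measure (\<lambda>(p,q,n). n)") auto

definition perm_count :: "int set \<Rightarrow> nat \<Rightarrow> nat" where
  "perm_count W n =
     card {\<pi>. \<pi> permutes {1..n} \<and> (\<forall>i\<in>{1..n}. int (\<pi> i) - int i \<in> W)}"

end

theory Submission
  imports Defs
begin


definition ss :: "nat \<Rightarrow> nat \<Rightarrow> nat" where "ss m n = s_seq 1 (m+2) n"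

lemma ss_eq: "ss m n = (if n = 0 then 1 else 0) + (if 1 \<le> n then ss m (n - 1) else 0)
   + (if m+2 \<le> n then ss m (n - (m+2)) else 0)"
  unfolding ss_def by (subst s_seq.simps) simp

declare s_seq.simps[simp del]

lemma s_0: "ss m 0 = 1"
  using ss_eq[of m 0] by simp

lemma s_step: "1 \<le> n \<Longrightarrow> ss m n = ss m (n-1) + (if m+2 \<le> n then ss m (n-(m+2)) else 0)"
  using ss_eq[of m n] by simp

lemma s_small: "n \<le> m+1 \<Longrightarrow> ss m n = 1"
proof (induction n)
  case 0 then show ?case by (simp add: s_0)
next
  case (Suc n) then show ?case using s_step[of "Suc n" m] by auto
qed

lemma s_shift: "d \<le> m+1 \<Longrightarrow> ss m (n+d) = ss m n
   + (\<Sum>c\<in>{m+2-d..m+1}. if c \<le> n then ss m (n-c) else 0)"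
proof (induction d)
  case 0 then show ?case by simp
next
  case (Suc d)
  have e: "{m+2-Suc d..m+1} = insert (m+1-d) {m+2-d..m+1}" using Suc.prems by auto
  have fin: "m+1-d \<notin> {m+2-d..m+1}" using Suc.prems by auto
  have "ss m (n + Suc d) = ss m (n+d) + (if m+2 \<le> n + Suc d then ss m (n+Suc d-(m+2)) else 0)"
    using s_step[of "n + Suc d" m] by simp
  moreover have "(if m+2 \<le> n + Suc d then ss m (n+Suc d-(m+2)) else 0)
     = (if m+1-d \<le> n then ss m (n-(m+1-d)) else 0)"
    using Suc.prems by (auto intro!: arg_cong[where f="ss m"])
  ultimately have "ss m (n + Suc d) = ss m (n+d) + (if m+1-d \<le> n then ss m (n-(m+1-d)) else 0)" by simp
  also have "\<dots> = ss m n + (\<Sum>c\<in>{m+2-d..m+1}. if c \<le> n then ss m (n-c) else 0) + (if m+1-d \<le> n then ss m (n-(m+1-d)) else 0)"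
    using Suc by simp
  also have "\<dots> = ss m n + (\<Sum>c\<in>{m+2-Suc d..m+1}. if c \<le> n then ss m (n-c) else 0)"
    unfolding e using fin by (simp add: sum.insert_if)
  finally show ?case .
qed

function R :: "nat \<Rightarrow> nat \<Rightarrow> nat \<Rightarrow> nat" where
  "R m j t = (if j = 0 then 1 else
      (\<Sum>c\<in>{t..m+1}. if 1 \<le> c \<and> c \<le> j then R m (j-c) (m+2-c) else 0))"
  by auto
termination by (relation "measure (\<lambda>(m,j,t). j)") auto

declare R.simps[simp del]

lemma R_0: "R m 0 t = 1" by (subst R.simps) simp

lemma R_pos: "1 \<le> j \<Longrightarrow> R m j t = (\<Sum>c\<in>{t..m+1}. if 1 \<le> c \<and> c \<le> j then R m (j-c) (m+2-c) else 0)"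
  by (subst R.simps) simp

lemma R_conv:
  assumes "1 \<le> t" "t \<le> m+2"
  shows "(\<Sum>j=0..n. R m j t * ss m (n-j)^2) = ss m n * ss m (n+(m+2-t))"
  using assms
proof (induction n arbitrary: t rule: less_induct)
  case (less n)
  let ?s = "ss m"
  have split: "{0..n} = insert 0 {1..n}" by auto
  have "(\<Sum>j=0..n. R m j t * ?s (n-j)^2) = ?s n ^2 + (\<Sum>j=1..n. R m j t * ?s (n-j)^2)"
    by (simp add: split R_0)
  also have "(\<Sum>j=1..n. R m j t * ?s (n-j)^2)
     = (\<Sum>j=1..n. \<Sum>c\<in>{t..m+1}. (if c \<le> j then R m (j-c) (m+2-c) * ?s (n-j)^2 else 0))"
    apply (rule sum.cong, simp)
    using less.prems by (subst R_pos)  (auto simp: sum_distrib_right distrib_right intro!: sum.cong)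
  also have "\<dots> = (\<Sum>c\<in>{t..m+1}. \<Sum>j=1..n. (if c \<le> j then R m (j-c) (m+2-c) * ?s (n-j)^2 else 0))"
    by (rule sum.swap)
  also have "\<dots> = (\<Sum>c\<in>{t..m+1}. if c \<le> n then ?s (n-c) * ?s n else 0)"
  proof (rule sum.cong, simp)
    fix c assume c: "c \<in> {t..m+1}"
    show "(\<Sum>j=1..n. (if c \<le> j then R m (j-c) (m+2-c) * ?s (n-j)^2 else 0)) = (if c \<le> n then ?s (n-c) * ?s n else 0)"
    proof (cases "c \<le> n")
      case True
      have "(\<Sum>j=1..n. (if c \<le> j then R m (j-c) (m+2-c) * ?s (n-j)^2 else 0))
         = (\<Sum>j=c..n. R m (j-c) (m+2-c) * ?s (n-j)^2)"
        using c less.prems by (intro sum.mono_neutral_cong_right) auto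
      also have "\<dots> = (\<Sum>j=0..n-c. R m j (m+2-c) * ?s (n-c-j)^2)"
        using True by (intro sum.reindex_bij_witness[where i="\<lambda>j. j + c" and j="\<lambda>j. j - c"]) auto
      also have "\<dots> = ?s (n-c) * ?s (n-c + (m+2-(m+2-c)))"
        using c less.prems True by (intro less.IH) auto
      also have "\<dots> = ?s (n-c) * ?s n" using c True less.prems by simp
      finally show ?thesis using True by simp
    next
      case False
      then show ?thesis by (intro trans[OF sum.neutral]) auto
    qed
  qed
  also have "?s n ^2 + (\<Sum>c\<in>{t..m+1}. if c \<le> n then ?s (n-c) * ?s n else 0)
     = ?s n * (?s n + (\<Sum>c\<in>{t..m+1}. if c \<le> n then ?s (n-c) else 0))"
  proof -
    have "(\<Sum>c\<in>{t..m+1}. if c \<le> n then ?s (n-c) * ?s n else 0) = ?s n * (\<Sum>c\<in>{t..m+1}. if c \<le> n then ?s (n-c) else 0)"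
      by (subst sum_distrib_left) (rule sum.cong; simp)
    then show ?thesis by (simp add: power2_eq_square distrib_left)
  qed
  also have "?s n + (\<Sum>c\<in>{t..m+1}. if c \<le> n then ?s (n-c) else 0) = ?s (n + (m+2-t))"
    using s_shift[of "m+2-t" m n] less.prems by simp
  finally show ?case .
qed


definition good :: "nat \<Rightarrow> nat \<Rightarrow> nat set \<Rightarrow> bool" where
  "good m j S \<longleftrightarrow> S \<subseteq> {1..j+1} \<and> 1 \<in> S \<and> j+1 \<in> S
     \<and> (\<forall>x\<in>S. x \<le> j \<longrightarrow> (\<exists>y\<in>S. x < y \<and> y \<le> x+m+1))
     \<and> (\<forall>x\<in>S. \<forall>y\<in>S. \<forall>z\<in>S. x < y \<longrightarrow> y < z \<longrightarrow> x+m+2 \<le> z)"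

definition goodt :: "nat \<Rightarrow> nat \<Rightarrow> nat \<Rightarrow> nat set \<Rightarrow> bool" where
  "goodt m j t S \<longleftrightarrow> good m j S \<and> (\<forall>y\<in>S. y \<le> j \<longrightarrow> y + t \<le> j+1)"

lemma goodt_finite: "finite {S. goodt m j t S}"
proof (rule finite_subset[of _ "Pow {1..j+1}"])
  show "{S. goodt m j t S} \<subseteq> Pow {1..j+1}" by (auto simp: goodt_def good_def)
qed simp

lemma goodt_0: "{S. goodt m 0 t S} = {{1}}"
  by (auto simp: goodt_def good_def)

definition Afib :: "nat \<Rightarrow> nat \<Rightarrow> nat \<Rightarrow> nat \<Rightarrow> nat set set" where
  "Afib m j t c = {S. goodt m j t S \<and> j+1-c \<in> S \<and> (\<forall>y\<in>S. y \<le> j \<longrightarrow> y \<le> j+1-c)}"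

lemma goodt_union:
  assumes "1 \<le> j" "1 \<le> t"
  shows "{S. goodt m j t S} = (\<Union>c\<in>{c\<in>{t..m+1}. c \<le> j}. Afib m j t c)"
proof
  show "{S. goodt m j t S} \<subseteq> (\<Union>c\<in>{c\<in>{t..m+1}. c \<le> j}. Afib m j t c)"
  proof
    fix S assume "S \<in> {S. goodt m j t S}"
    then have g: "goodt m j t S" by simp
    then have S: "S \<subseteq> {1..j+1}" "1 \<in> S" "j+1 \<in> S"
      and G2: "\<forall>x\<in>S. x \<le> j \<longrightarrow> (\<exists>y\<in>S. x < y \<and> y \<le> x+m+1)"
      and T: "\<forall>y\<in>S. y \<le> j \<longrightarrow> y + t \<le> j+1"
      by (auto simp: goodt_def good_def)
    let ?S' = "S - {j+1}"
    have "finite S" using S(1) by (rule finite_subset) simp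
    then have fin: "finite ?S'" by simp
    have ne: "1 \<in> ?S'" using S assms by auto
    define p where "p = Max ?S'"
    have pS: "p \<in> ?S'" unfolding p_def using fin ne by (intro Max_in) auto
    have pmax: "\<And>y. y \<in> ?S' \<Longrightarrow> y \<le> p" unfolding p_def by (rule Max_ge[OF fin])
    have p1: "1 \<le> p" using pmax[OF ne] .
    have pj: "p \<le> j" using pS S(1) by auto
    obtain y where y: "y \<in> S" "p < y" "y \<le> p+m+1" using G2 pS pj by auto
    have "y = j+1"
    proof (rule ccontr)
      assume "y \<noteq> j+1"
      then have "y \<in> ?S'" using y(1) by blast
      then have "y \<le> p" by (rule pmax)
      then show False using y(2) by simp
    qed
    then have c1: "j+1-p \<le> m+1" using y by simp
    have c2: "t \<le> j+1-p" using T pS pj by auto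
    have e: "j+1-(j+1-p) = p" using pj by simp
    have "\<forall>y\<in>S. y \<le> j \<longrightarrow> y \<le> j+1-(j+1-p)" unfolding e
    proof (intro ballI impI)
      fix y assume "y \<in> S" "y \<le> j"
      then have "y \<in> ?S'" by auto
      then show "y \<le> p" by (rule pmax)
    qed
    moreover have "j+1-(j+1-p) \<in> S" unfolding e using pS by blast
    ultimately have "S \<in> Afib m j t (j+1-p)"
      unfolding Afib_def using g by blast
    then show "S \<in> (\<Union>c\<in>{c\<in>{t..m+1}. c \<le> j}. Afib m j t c)"
      using c1 c2 p1 by (intro UN_I[of "j+1-p"]) auto
  qed
next
  show "(\<Union>c\<in>{c\<in>{t..m+1}. c \<le> j}. Afib m j t c) \<subseteq> {S. goodt m j t S}"
    unfolding Afib_def by blast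
qed

lemma Afib_disjoint:
  assumes "1 \<le> c" "1 \<le> c'" "c \<noteq> c'" "c \<le> j" "c' \<le> j"
  shows "Afib m j t c \<inter> Afib m j t c' = {}"
proof (rule ccontr)
  assume "Afib m j t c \<inter> Afib m j t c' \<noteq> {}"
  then obtain S where "S \<in> Afib m j t c" "S \<in> Afib m j t c'" by blast
  then have a: "j+1-c \<in> S" "\<forall>y\<in>S. y \<le> j \<longrightarrow> y \<le> j+1-c" "j+1-c' \<in> S" "\<forall>y\<in>S. y \<le> j \<longrightarrow> y \<le> j+1-c'"
    by (auto simp: Afib_def)
  have "j+1-c \<le> j+1-c'" using a assms by auto
  moreover have "j+1-c' \<le> j+1-c" using a assms by auto
  ultimately show False using assms by auto
qed

lemma Afib_bij:
  assumes c: "t \<le> c" "c \<le> m+1" "1 \<le> c" "c \<le> j"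
  shows "bij_betw (insert (j+1)) {S'. goodt m (j-c) (m+2-c) S'} (Afib m j t c)"
proof (rule bij_betw_byWitness[where f'="\<lambda>S. S - {j+1}"])
  show "\<forall>S\<in>{S'. goodt m (j-c) (m+2-c) S'}. insert (j+1) S - {j+1} = S"
  proof
    fix S assume "S \<in> {S'. goodt m (j-c) (m+2-c) S'}"
    then have "S \<subseteq> {1..j-c+1}" by (auto simp: goodt_def good_def)
    then have "j+1 \<notin> S" using c by auto
    then show "insert (j+1) S - {j+1} = S" by auto
  qed
  show "\<forall>S\<in>Afib m j t c. insert (j+1) (S - {j+1}) = S"
    by (auto simp: Afib_def goodt_def good_def)
  show "insert (j+1) ` {S'. goodt m (j-c) (m+2-c) S'} \<subseteq> Afib m j t c"
  proof
    fix S assume "S \<in> insert (j+1) ` {S'. goodt m (j-c) (m+2-c) S'}"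
    then obtain S' where S: "S = insert (j+1) S'" and g: "goodt m (j-c) (m+2-c) S'" by auto
    let ?p = "j+1-c"
    have pe0: "j+1-c = j-c+1" using c by simp
    have S1: "S' \<subseteq> {1..?p}" "1 \<in> S'" "?p \<in> S'"
      and G2: "\<forall>x\<in>S'. x \<le> j-c \<longrightarrow> (\<exists>y\<in>S'. x < y \<and> y \<le> x+m+1)"
      and G3: "\<forall>x\<in>S'. \<forall>y\<in>S'. \<forall>z\<in>S'. x < y \<longrightarrow> y < z \<longrightarrow> x+m+2 \<le> z"
      and T: "\<forall>y\<in>S'. y \<le> j-c \<longrightarrow> y + (m+2-c) \<le> j-c+1"
      using g c unfolding pe0 by (auto simp: goodt_def good_def)
    have S1b: "\<forall>x\<in>S'. 1 \<le> x \<and> x \<le> ?p" using S1(1) by (simp add: subset_iff)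
    have a1: "S \<subseteq> {1..j+1}"
    proof
      fix x assume x: "x \<in> S"
      show "x \<in> {1..j+1}"
      proof (cases "x = j+1")
        case False
        then have "x \<in> {1..?p}" using x S S1(1) by blast
        then show ?thesis by auto
      qed simp
    qed
    have a2: "\<forall>x\<in>S. x \<le> j \<longrightarrow> (\<exists>y\<in>S. x < y \<and> y \<le> x+m+1)"
    proof (intro ballI impI)
      fix x assume x: "x \<in> S" "x \<le> j"
      then have xS': "x \<in> S'" using S by auto
      show "\<exists>y\<in>S. x < y \<and> y \<le> x+m+1"
      proof (cases "x = ?p")
        case True then show ?thesis using S c by (intro bexI[of _ "j+1"]) auto
      next
        case False
        then have "x \<le> j - c" using xS' S1 S1b c by auto
        then obtain y where "y \<in> S'" "x < y" "y \<le> x+m+1" using G2 xS' by blast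
        then show ?thesis using S by auto
      qed
    qed
    have a3: "\<forall>x\<in>S. \<forall>y\<in>S. \<forall>z\<in>S. x < y \<longrightarrow> y < z \<longrightarrow> x+m+2 \<le> z"
    proof (intro ballI impI)
      fix x y z assume xyz: "x \<in> S" "y \<in> S" "z \<in> S" "x < y" "y < z"
      have le: "\<And>u. u \<in> S \<Longrightarrow> u \<le> j+1" using a1 by auto
      have x': "x \<in> S'" "y \<in> S'" using xyz le S by force+
      show "x+m+2 \<le> z"
      proof (cases "z = j+1")
        case False
        then have "z \<in> S'" using xyz S by auto
        then show ?thesis using G3 x' xyz by blast
      next
        case True
        have yp: "y \<le> ?p" using x' S1 S1b by auto
        show ?thesis
        proof (cases "y = ?p")
          case True
          then have "x \<le> j - c" using xyz c by auto
          then have "x + (m+2-c) \<le> j-c+1" using T x' by blast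
          then show ?thesis using \<open>z = j+1\<close> c by auto
        next
          case False
          then have "y < ?p" using yp by auto
          then have "x+m+2 \<le> ?p" using G3 x' S1 xyz by blast
          then show ?thesis using \<open>z = j+1\<close> by auto
        qed
      qed
    qed
    have a4: "\<forall>y\<in>S. y \<le> j \<longrightarrow> y + t \<le> j+1" using S S1 S1b c by force
    have a5: "\<forall>y\<in>S. y \<le> j \<longrightarrow> y \<le> j+1-c" using S S1 S1b c by force
    have pe: "j+1-c = j-c+1" using c by simp
    have a6: "j+1-c \<in> S" "1 \<in> S" "j+1 \<in> S" using S S1 pe by auto
    show "S \<in> Afib m j t c"
      unfolding Afib_def goodt_def good_def mem_Collect_eq using a1 a2 a3 a4 a5 a6 by blast
  qed
  show "(\<lambda>S. S - {j+1}) ` Afib m j t c \<subseteq> {S'. goodt m (j-c) (m+2-c) S'}"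
  proof
    fix S' assume "S' \<in> (\<lambda>S. S - {j+1}) ` Afib m j t c"
    then obtain S where S': "S' = S - {j+1}" and A: "S \<in> Afib m j t c" by auto
    let ?p = "j+1-c"
    have S: "S \<subseteq> {1..j+1}" "1 \<in> S" "j+1 \<in> S"
      and G2: "\<forall>x\<in>S. x \<le> j \<longrightarrow> (\<exists>y\<in>S. x < y \<and> y \<le> x+m+1)"
      and G3: "\<forall>x\<in>S. \<forall>y\<in>S. \<forall>z\<in>S. x < y \<longrightarrow> y < z \<longrightarrow> x+m+2 \<le> z"
      and pS: "?p \<in> S" and pmax: "\<forall>y\<in>S. y \<le> j \<longrightarrow> y \<le> ?p"
      using A by (auto simp: Afib_def goodt_def good_def)
    have b1: "S' \<subseteq> {1..j-c+1}"
    proof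
      fix x assume x: "x \<in> S'"
      then have x1: "x \<in> S" "x \<noteq> j+1" using S' by auto
      then have "x \<in> {1..j+1}" using S(1) by blast
      then have "1 \<le> x" "x \<le> j" using x1 by auto
      then have "x \<le> ?p" using pmax x1 by blast
      then show "x \<in> {1..j-c+1}" using c \<open>1 \<le> x\<close> by simp
    qed
    have b2: "1 \<in> S'" "j-c+1 \<in> S'" using S S' pS c by (auto simp: Suc_diff_le)
    have b3: "\<forall>x\<in>S'. x \<le> j-c \<longrightarrow> (\<exists>y\<in>S'. x < y \<and> y \<le> x+m+1)"
    proof (intro ballI impI)
      fix x assume x: "x \<in> S'" "x \<le> j-c"
      then have "x \<in> S" "x \<le> j" using S' c by auto
      then obtain y where y: "y \<in> S" "x < y" "y \<le> x+m+1" using G2 by blast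
      show "\<exists>y\<in>S'. x < y \<and> y \<le> x+m+1"
      proof (cases "y = j+1")
        case True then show ?thesis using b2 x y c S' by (intro bexI[of _ "j-c+1"]) auto
      next
        case False then show ?thesis using y S' by auto
      qed
    qed
    have b4: "\<forall>x\<in>S'. \<forall>y\<in>S'. \<forall>z\<in>S'. x < y \<longrightarrow> y < z \<longrightarrow> x+m+2 \<le> z" using G3 S' by auto
    have b5: "\<forall>y\<in>S'. y \<le> j-c \<longrightarrow> y + (m+2-c) \<le> j-c+1"
    proof (intro ballI impI)
      fix y assume y: "y \<in> S'" "y \<le> j-c"
      have "y < ?p" "?p < j+1" using y c by auto
      then have "y+m+2 \<le> j+1" using G3 y S' pS S by blast
      then show "y + (m+2-c) \<le> j-c+1" using c by auto
    qed
    show "S' \<in> {S'. goodt m (j-c) (m+2-c) S'}"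
      unfolding goodt_def good_def using b1 b2 b3 b4 b5 by auto
  qed
qed

lemma goodt_card:
  assumes "1 \<le> t" "t \<le> m+1"
  shows "card {S. goodt m j t S} = R m j t"
  using assms
proof (induction j arbitrary: t rule: less_induct)
  case (less j)
  show ?case
  proof (cases "j = 0")
    case True then show ?thesis by (simp add: goodt_0 R_0)
  next
    case False
    let ?C = "{c\<in>{t..m+1}. c \<le> j}"
    have "card {S. goodt m j t S} = card (\<Union>c\<in>?C. Afib m j t c)"
      using goodt_union[of j t m] False less.prems by simp
    also have "\<dots> = (\<Sum>c\<in>?C. card (Afib m j t c))"
    proof (rule card_UN_disjoint)
      show "finite ?C" by simp
      show "\<forall>c\<in>?C. finite (Afib m j t c)"
        using goodt_finite[of m j t] by (auto simp: Afib_def intro: finite_subset)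
      show "\<forall>c\<in>?C. \<forall>c'\<in>?C. c \<noteq> c' \<longrightarrow> Afib m j t c \<inter> Afib m j t c' = {}"
        using Afib_disjoint less.prems by auto
    qed
    also have "\<dots> = (\<Sum>c\<in>?C. R m (j-c) (m+2-c))"
    proof (rule sum.cong, simp)
      fix c assume c: "c \<in> ?C"
      have "card (Afib m j t c) = card {S'. goodt m (j-c) (m+2-c) S'}"
        using Afib_bij[of t c m j] c less.prems by (simp add: bij_betw_same_card)
      also have "\<dots> = R m (j-c) (m+2-c)"
        using c less.prems False by (intro less.IH) auto
      finally show "card (Afib m j t c) = R m (j-c) (m+2-c)" .
    qed
    also have "\<dots> = (\<Sum>c\<in>{t..m+1}. if 1 \<le> c \<and> c \<le> j then R m (j-c) (m+2-c) else 0)"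
      using less.prems by (intro sum.mono_neutral_cong_left) auto
    also have "\<dots> = R m j t" using False by (simp add: R_pos)
    finally show ?thesis .
  qed
qed


definition valid :: "nat \<Rightarrow> nat \<Rightarrow> (nat \<Rightarrow> nat) \<Rightarrow> bool" where
  "valid m N \<pi> \<longleftrightarrow> \<pi> permutes {1..N} \<and> (\<forall>i\<in>{1..N}. int (\<pi> i) - int i \<in> {-2, -1, int m})"

definition Phi :: "nat \<Rightarrow> nat \<Rightarrow> (nat \<Rightarrow> nat) \<Rightarrow> nat set" where
  "Phi m N \<pi> = {i\<in>{1..N}. \<pi> i = i + m}"

lemma valid_cases:
  assumes "valid m N \<pi>" "i \<in> {1..N}"
  shows "\<pi> i = i + m \<or> \<pi> i + 1 = i \<or> \<pi> i + 2 = i"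
proof -
  have "int (\<pi> i) - int i = -2 \<or> int (\<pi> i) - int i = -1 \<or> int (\<pi> i) - int i = int m"
    using assms unfolding valid_def by auto
  then show ?thesis by arith
qed

lemma valid_range:
  assumes "valid m N \<pi>" "i \<in> {1..N}"
  shows "\<pi> i \<in> {1..N}"
proof -
  have "\<pi> permutes {1..N}" using assms unfolding valid_def by simp
  then show ?thesis using permutes_in_image[of \<pi> "{1..N}" i] assms(2) by simp
qed

lemma valid_down:
  assumes "valid m N \<pi>" "i \<in> {1..N}" "i \<notin> Phi m N \<pi>"
  shows "\<pi> i + 1 = i \<or> \<pi> i + 2 = i"
proof -
  have "\<pi> i \<noteq> i + m" using assms(2,3) unfolding Phi_def by simp
  then show ?thesis using valid_cases[OF assms(1,2)] by simp
qed

lemma valid_inj: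
  assumes "valid m N \<pi>" "\<pi> a = \<pi> b"
  shows "a = b"
  using assms permutes_inj unfolding valid_def inj_def by blast

lemma valid_mono:
  assumes v: "valid m N \<pi>" and r: "r \<in> {1..N}" "r' \<in> {1..N}" "r < r'"
    and nr: "r \<notin> Phi m N \<pi>" "r' \<notin> Phi m N \<pi>"
  shows "\<pi> r < \<pi> r'"
proof (rule ccontr)
  assume "\<not> \<pi> r < \<pi> r'"
  moreover have "\<pi> r + 1 = r \<or> \<pi> r + 2 = r" using valid_down[OF v r(1) nr(1)] .
  moreover have "\<pi> r' + 1 = r' \<or> \<pi> r' + 2 = r'" using valid_down[OF v r(2) nr(2)] .
  ultimately have "\<pi> r = \<pi> r'" using r(3) by auto
  then show False using valid_inj[OF v] r(3) by blast
qed

lemma valid_unique_step: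
  assumes v: "valid m N \<pi>" and w: "valid m N \<sigma>" and ph: "Phi m N \<pi> = Phi m N \<sigma>"
    and below: "\<forall>r'<r. \<pi> r' = \<sigma> r'" and r: "r \<in> {1..N}" "r \<notin> Phi m N \<pi>"
  shows "\<not> \<pi> r < \<sigma> r"
proof
  assume lt: "\<pi> r < \<sigma> r"
  let ?v = "\<pi> r"
  have vN: "?v \<in> {1..N}" using valid_range[OF v r(1)] .
  define r2 where "r2 = inv \<sigma> ?v"
  have sr2: "\<sigma> r2 = ?v" unfolding r2_def using w permutes_inverses unfolding valid_def by metis
  have r2N: "r2 \<in> {1..N}"
  proof (rule ccontr)
    assume "r2 \<notin> {1..N}"
    then have "\<sigma> r2 = r2" using w permutes_not_in unfolding valid_def by metis
    then show False using sr2 vN \<open>r2 \<notin> {1..N}\<close> by simp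
  qed
  show False
  proof (cases "r2 \<in> Phi m N \<pi>")
    case True
    then have "\<sigma> r2 = r2 + m" "\<pi> r2 = r2 + m" using ph by (auto simp: Phi_def)
    then have "\<pi> r2 = \<pi> r" using sr2 by simp
    then have "r2 = r" using valid_inj[OF v] by blast
    then show False using True r by simp
  next
    case False
    consider "r2 < r" | "r2 = r" | "r < r2" by linarith
    then show False
    proof cases
      case 1
      then have "\<pi> r2 = \<pi> r" using below sr2 by simp
      then show False using valid_inj[OF v] 1 by blast
    next
      case 2 then show False using sr2 lt by simp
    next
      case 3
      have "\<sigma> r < \<sigma> r2" using valid_mono[OF w r(1) r2N 3] r(2) False ph by simp
      then show False using sr2 lt by simp
    qed
  qed
qed

lemma valid_unique:
  assumes v: "valid m N \<pi>" and w: "valid m N \<sigma>" and ph: "Phi m N \<pi> = Phi m N \<sigma>"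
  shows "\<pi> = \<sigma>"
proof
  fix r show "\<pi> r = \<sigma> r"
  proof (induction r rule: less_induct)
    case (less r)
    then have below: "\<forall>r'<r. \<pi> r' = \<sigma> r'" by blast
    show ?case
    proof (cases "r \<in> {1..N}")
      case False
      then show ?thesis using v w permutes_not_in unfolding valid_def by metis
    next
      case True
      show ?thesis
      proof (cases "r \<in> Phi m N \<pi>")
        case True
        then have "r \<in> Phi m N \<sigma>" using ph by simp
        then show ?thesis using True by (simp add: Phi_def)
      next
        case False
        have "\<not> \<pi> r < \<sigma> r" using valid_unique_step[OF v w ph below \<open>r \<in> {1..N}\<close> False] .
        moreover have "\<not> \<sigma> r < \<pi> r"
          using valid_unique_step[OF w v ph[symmetric]] below \<open>r \<in> {1..N}\<close> False ph by auto
        ultimately show ?thesis by simp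
      qed
    qed
  qed
qed


lemma Phi_sub: "Phi m N \<pi> \<subseteq> {1..N}" by (auto simp: Phi_def)

lemma card_le_Int:
  "card ({1..a} \<inter> (\<lambda>i. i + m) ` S) = card (S \<inter> {1..a-m})" if "S \<subseteq> {1..}" for a m :: nat and S
proof -
  have "{1..a} \<inter> (\<lambda>i. i + m) ` S = (\<lambda>i. i + m) ` (S \<inter> {1..a-m})"
  proof (intro equalityI subsetI)
    fix c assume "c \<in> {1..a} \<inter> (\<lambda>i. i + m) ` S"
    then obtain i where i: "i \<in> S" "c = i + m" "c \<le> a" by auto
    then have "1 \<le> i" using that by auto
    then have "i \<in> S \<inter> {1..a-m}" using i by auto
    then show "c \<in> (\<lambda>i. i + m) ` (S \<inter> {1..a-m})" using i(2) by blast
  next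
    fix c assume "c \<in> (\<lambda>i. i + m) ` (S \<inter> {1..a-m})"
    then obtain i where i: "i \<in> S" "c = i + m" "1 \<le> i" "i \<le> a - m" by auto
    then have "c \<in> {1..a}" by auto
    then show "c \<in> {1..a} \<inter> (\<lambda>i. i + m) ` S" using i(1,2) by blast
  qed
  then show ?thesis by (simp add: card_image inj_on_def)
qed

lemma valid_G2:
  assumes v: "valid m (j+m+1) \<pi>" and x: "x \<in> Phi m (j+m+1) \<pi>" "x \<le> j"
  shows "\<exists>y\<in>Phi m (j+m+1) \<pi>. x < y \<and> y \<le> x+m+1"
proof (rule ccontr)
  let ?N = "j+m+1" and ?S = "Phi m (j+m+1) \<pi>"
  assume none: "\<not> (\<exists>y\<in>?S. x < y \<and> y \<le> x+m+1)"
  let ?t = "x+m+1"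
  let ?I = "(\<lambda>i. i + m) ` ?S"
  define X where "X = {1..?t} - ?S"
  define Y where "Y = {1..?t-1} - ?I"
  have SI: "?S \<subseteq> {1..}" by (auto simp: Phi_def)
  have "\<pi> ` X \<subseteq> Y"
  proof
    fix c assume "c \<in> \<pi> ` X"
    then obtain r where r: "r \<in> X" "c = \<pi> r" by auto
    have rN: "r \<in> {1..?N}" using r x unfolding X_def by auto
    have rS: "r \<notin> ?S" using r X_def by auto
    have d: "\<pi> r + 1 = r \<or> \<pi> r + 2 = r" using valid_down[OF v rN rS] .
    have c1: "c \<in> {1..?N}" using valid_range[OF v rN] r by simp
    have "c \<notin> ?I"
    proof
      assume "c \<in> ?I"
      then obtain i where i: "i \<in> ?S" "c = i + m" by auto
      then have "\<pi> i = c" by (auto simp: Phi_def)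
      then have "i = r" using valid_inj[OF v] r by metis
      then show False using i rS by simp
    qed
    then show "c \<in> Y" unfolding Y_def using c1 d r(2) rN X_def r(1) by auto
  qed
  moreover have "inj_on \<pi> X" using v permutes_inj_on unfolding valid_def by blast
  ultimately have le: "card X \<le> card Y"
  proof -
    assume a: "\<pi> ` X \<subseteq> Y" "inj_on \<pi> X"
    have "card (\<pi> ` X) = card X" using a(2) by (rule card_image)
    moreover have "card (\<pi> ` X) \<le> card Y" using a(1) unfolding Y_def by (intro card_mono) auto
    ultimately show ?thesis by simp
  qed
  have S_eq: "{1..?t} \<inter> ?S = ?S \<inter> {1..x}" using none by auto
  have cX0: "card X = ?t - card ({1..?t} \<inter> ?S)"
    unfolding X_def by (subst card_Diff_subset_Int) auto
  have cX: "card X = ?t - card (?S \<inter> {1..x})"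
    using cX0 unfolding S_eq .
  have cY: "card Y = ?t - 1 - card (?S \<inter> {1..x})"
    unfolding Y_def using card_le_Int[OF SI, of "?t-1" m] by (subst card_Diff_subset_Int) auto
  have "card (?S \<inter> {1..x}) \<le> card {1..x}" by (intro card_mono) auto
  then have "card (?S \<inter> {1..x}) \<le> x" by simp
  then show False using le cX cY by linarith
qed

lemma valid_G3:
  assumes v: "valid m (j+m+1) \<pi>" and xyz: "x \<in> Phi m (j+m+1) \<pi>" "y \<in> Phi m (j+m+1) \<pi>" "z \<in> Phi m (j+m+1) \<pi>"
    "x < y" "y < z"
  shows "x+m+2 \<le> z"
proof (rule ccontr)
  let ?N = "j+m+1" and ?S = "Phi m (j+m+1) \<pi>"
  assume "\<not> x+m+2 \<le> z"
  then have lt: "z < x+m+2" by simp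
  let ?I = "(\<lambda>i. i + m) ` ?S"
  define X where "X = {1..z} - ?S"
  define Y where "Y = {1..z-2} - ?I"
  have SI: "?S \<subseteq> {1..}" by (auto simp: Phi_def)
  have z1: "z \<in> {1..?N}" using xyz(3) by (simp add: Phi_def)
  have "\<pi> z \<in> {1..?N}" using valid_range[OF v z1] .
  then have zN: "z + m \<le> ?N" "1 \<le> x" using xyz by (auto simp: Phi_def)
  have "Y \<subseteq> \<pi> ` X"
  proof
    fix c assume c: "c \<in> Y"
    then have cN: "c \<in> {1..?N}" using Y_def zN by auto
    define r where "r = inv \<pi> c"
    have pr: "\<pi> r = c" unfolding r_def using v permutes_inverses unfolding valid_def by metis
    have rN: "r \<in> {1..?N}"
    proof (rule ccontr)
      assume "r \<notin> {1..?N}"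
      then have "\<pi> r = r" using v permutes_not_in unfolding valid_def by metis
      then show False using pr cN \<open>r \<notin> {1..?N}\<close> by simp
    qed
    have rS: "r \<notin> ?S"
    proof
      assume "r \<in> ?S"
      then have "c = r + m" using pr by (auto simp: Phi_def)
      then show False using c \<open>r \<in> ?S\<close> Y_def by auto
    qed
    have "\<pi> r + 1 = r \<or> \<pi> r + 2 = r" using valid_down[OF v rN rS] .
    then have "r \<le> z" using pr c Y_def by auto
    then have "r \<in> X" using rN rS X_def by auto
    then show "c \<in> \<pi> ` X" using pr by auto
  qed
  then have le: "card Y \<le> card X"
  proof -
    assume a: "Y \<subseteq> \<pi> ` X"
    have "card Y \<le> card (\<pi> ` X)" using a unfolding X_def by (intro card_mono) auto
    also have "\<dots> \<le> card X" unfolding X_def by (intro card_image_le) auto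
    finally show ?thesis .
  qed
  have cX0: "card X = z - card ({1..z} \<inter> ?S)"
    unfolding X_def by (subst card_Diff_subset_Int) auto
  have ie: "{1..z} \<inter> ?S = ?S \<inter> {1..z}" by blast
  have cX: "card X = z - card (?S \<inter> {1..z})" using cX0 unfolding ie .
  have cY: "card Y = z - 2 - card (?S \<inter> {1..z-2-m})"
    unfolding Y_def using card_le_Int[OF SI, of "z-2" m] by (subst card_Diff_subset_Int) auto
  have sub: "insert x (insert y (insert z (?S \<inter> {1..z-2-m}))) \<subseteq> ?S \<inter> {1..z}"
    using xyz zN by auto
  have nin: "x \<notin> ?S \<inter> {1..z-2-m}" "y \<notin> ?S \<inter> {1..z-2-m}" "z \<notin> ?S \<inter> {1..z-2-m}"
    using lt xyz by auto
  have "card (insert x (insert y (insert z (?S \<inter> {1..z-2-m})))) = card (?S \<inter> {1..z-2-m}) + 3"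
    using nin xyz by simp
  moreover have "card (insert x (insert y (insert z (?S \<inter> {1..z-2-m})))) \<le> card (?S \<inter> {1..z})"
    using sub by (intro card_mono) auto
  ultimately have c3: "card (?S \<inter> {1..z-2-m}) + 3 \<le> card (?S \<inter> {1..z})" by simp
  have "card (?S \<inter> {1..z}) \<le> card {1..z}" by (intro card_mono) auto
  then have "card (?S \<inter> {1..z}) \<le> z" by simp
  then show False using le cX cY c3 by linarith
qed

lemma valid_good:
  assumes v: "valid m (j+m+1) \<pi>"
  shows "good m j (Phi m (j+m+1) \<pi>)"
proof -
  let ?N = "j+m+1" and ?S = "Phi m (j+m+1) \<pi>"
  have a1: "?S \<subseteq> {1..j+1}"
  proof
    fix i assume "i \<in> ?S"
    then have "i \<in> {1..?N}" "\<pi> i = i + m" by (auto simp: Phi_def)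
    then have "\<pi> i \<in> {1..?N}" using valid_range[OF v \<open>i \<in> {1..?N}\<close>] by blast
    then show "i \<in> {1..j+1}" using \<open>\<pi> i = i + m\<close> \<open>i \<in> {1..?N}\<close> by simp
  qed
  have a2: "1 \<in> ?S"
  proof -
    have "1 \<in> {1..?N}" by simp
    then have "\<pi> 1 = 1 + m \<or> \<pi> 1 + 1 = 1 \<or> \<pi> 1 + 2 = 1" "\<pi> 1 \<in> {1..?N}"
      using valid_cases[OF v \<open>1 \<in> {1..?N}\<close>] valid_range[OF v \<open>1 \<in> {1..?N}\<close>] by blast+
    then show ?thesis by (auto simp: Phi_def)
  qed
  have a3: "j+1 \<in> ?S"
  proof -
    define i where "i = inv \<pi> ?N"
    have pi: "\<pi> i = ?N" unfolding i_def using v permutes_inverses unfolding valid_def by metis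
    have iN: "i \<in> {1..?N}"
    proof (rule ccontr)
      assume "i \<notin> {1..?N}"
      then have "\<pi> i = i" using v permutes_not_in unfolding valid_def by metis
      then show False using pi \<open>i \<notin> {1..?N}\<close> by simp
    qed
    have "\<pi> i = i + m \<or> \<pi> i + 1 = i \<or> \<pi> i + 2 = i" using valid_cases[OF v iN] .
    then have "i = j+1" using pi iN by auto
    then show ?thesis using pi iN by (auto simp: Phi_def)
  qed
  show ?thesis unfolding good_def
    using a1 a2 a3 valid_G2[OF v] valid_G3[OF v] by blast
qed


definition two :: "nat set \<Rightarrow> nat \<Rightarrow> nat \<Rightarrow> bool" where
  "two S a b \<longleftrightarrow> (\<exists>x\<in>S. \<exists>y\<in>S. a \<le> x \<and> x < y \<and> y \<le> b)"

definition psi :: "nat \<Rightarrow> nat \<Rightarrow> nat set \<Rightarrow> nat \<Rightarrow> nat" where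
  "psi m N S r = (if r \<in> S then r + m else if r \<in> {1..N} then r - (if two S (r-m-1) r then 2 else 1) else r)"

lemma psi_down:
  assumes g: "good m j S" and r: "r \<in> {1..j+m+1}" "r \<notin> S"
  shows "(psi m (j+m+1) S r + 2 = r \<and> two S (r-m-1) r) \<or> (psi m (j+m+1) S r + 1 = r \<and> \<not> two S (r-m-1) r)"
proof -
  have S: "S \<subseteq> {1..j+1}" "1 \<in> S" using g by (auto simp: good_def)
  show ?thesis
  proof (cases "two S (r-m-1) r")
    case True
    then obtain x y where "x \<in> S" "y \<in> S" "x < y" "y \<le> r" unfolding two_def by blast
    moreover have "y \<noteq> r" using r \<open>y \<in> S\<close> by blast
    moreover have "1 \<le> x" using S \<open>x \<in> S\<close> by auto
    ultimately have "3 \<le> r" by linarith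
    then show ?thesis using True r by (simp add: psi_def)
  next
    case False
    have "r \<noteq> 1" using r S by auto
    then have "2 \<le> r" using r by auto
    then show ?thesis using False r by (simp add: psi_def)
  qed
qed

lemma psi_ge1:
  assumes g: "good m j S" and r: "r \<in> {1..j+m+1}" "r \<notin> S"
  shows "1 \<le> psi m (j+m+1) S r"
proof -
  have S: "S \<subseteq> {1..j+1}" "1 \<in> S" using g by (auto simp: good_def)
  show ?thesis
  proof (cases "two S (r-m-1) r")
    case True
    then obtain x y where "x \<in> S" "y \<in> S" "x < y" "y \<le> r" unfolding two_def by blast
    moreover have "y \<noteq> r" using r \<open>y \<in> S\<close> by blast
    moreover have "1 \<le> x" using S \<open>x \<in> S\<close> by auto
    ultimately have "3 \<le> r" by linarith
    then show ?thesis using True r by (simp add: psi_def)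
  next
    case False
    have "r \<noteq> 1" using r S by auto
    then have "2 \<le> r" using r by auto
    then show ?thesis using False r by (simp add: psi_def)
  qed
qed

lemma psi_in_S: "r \<in> S \<Longrightarrow> psi m N S r = r + m" by (simp add: psi_def)

lemma psi_out: "r \<notin> {1..N} \<Longrightarrow> good m j S \<Longrightarrow> N = j+m+1 \<Longrightarrow> psi m N S r = r"
  by (auto simp: psi_def good_def)

lemma psi_inj:
  assumes g: "good m j S"
  shows "inj_on (psi m (j+m+1) S) {1..j+m+1}"
proof -
  let ?N = "j+m+1" and ?p = "psi m (j+m+1) S"
  have S: "S \<subseteq> {1..j+1}" and G2: "\<forall>x\<in>S. x \<le> j \<longrightarrow> (\<exists>y\<in>S. x < y \<and> y \<le> x+m+1)"
    and G3: "\<forall>x\<in>S. \<forall>y\<in>S. \<forall>z\<in>S. x < y \<longrightarrow> y < z \<longrightarrow> x+m+2 \<le> z"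
    using g by (auto simp: good_def)
  have nn: "?p r \<noteq> ?p r'" if r: "r \<in> {1..?N}" "r' \<in> {1..?N}" "r < r'" "r \<notin> S" "r' \<notin> S" for r r'
  proof
    assume eq: "?p r = ?p r'"
    have d: "(?p r + 2 = r \<and> two S (r-m-1) r) \<or> (?p r + 1 = r \<and> \<not> two S (r-m-1) r)"
      using psi_down[OF g r(1) r(4)] .
    have d': "(?p r' + 2 = r' \<and> two S (r'-m-1) r') \<or> (?p r' + 1 = r' \<and> \<not> two S (r'-m-1) r')"
      using psi_down[OF g r(2) r(5)] .
    have "r' = r + 1 \<and> two S (r'-m-1) r' \<and> \<not> two S (r-m-1) r" using d d' eq r(3) by auto
    then have "r' = r+1" "two S (r-m) (r+1)" "\<not> two S (r-m-1) r" by auto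
    then obtain x y where xy: "x \<in> S" "y \<in> S" "r - m \<le> x" "x < y" "y \<le> r+1" unfolding two_def by blast
    have "y \<noteq> r+1" using xy r \<open>r' = r+1\<close> by auto
    then have "two S (r-m-1) r" unfolding two_def using xy by (intro bexI[of _ x] bexI[of _ y]) auto
    then show False using \<open>\<not> two S (r-m-1) r\<close> by simp
  qed
  have mixed: "?p r \<noteq> ?p r'" if r: "r \<in> S" "r' \<in> {1..?N}" "r' \<notin> S" for r r'
  proof
    assume eq: "?p r = ?p r'"
    have pr: "?p r = r + m" using r psi_in_S by metis
    have d': "(?p r' + 2 = r' \<and> two S (r'-m-1) r') \<or> (?p r' + 1 = r' \<and> \<not> two S (r'-m-1) r')"
      using psi_down[OF g r(2) r(3)] .
    show False
    proof (cases "two S (r'-m-1) r'")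
      case False
      then have r': "r' = r+m+1" using d' eq pr by auto
      then have "r \<le> j" using r by auto
      then obtain y where y: "y \<in> S" "r < y" "y \<le> r+m+1" using G2 r by blast
      have "y \<noteq> r'" using y r by auto
      then have "two S (r'-m-1) r'" unfolding two_def using y r r' by (intro bexI[of _ r] bexI[of _ y]) auto
      then show False using False by simp
    next
      case True
      then have r': "r' = r+m+2" using d' eq pr by auto
      then obtain x y where xy: "x \<in> S" "y \<in> S" "r+1 \<le> x" "x < y" "y \<le> r+m+2" using True unfolding two_def by auto
      have "y \<noteq> r'" using xy r by auto
      moreover have "r+m+2 \<le> y" using G3 r(1) xy by auto
      ultimately show False using xy r' by auto
    qed
  qed
  show ?thesis
  proof (rule inj_onI)
    fix r r' assume r: "r \<in> {1..?N}" "r' \<in> {1..?N}" and eq: "?p r = ?p r'"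
    show "r = r'"
    proof (cases "r \<in> S")
      case True
      show ?thesis
      proof (cases "r' \<in> S")
        case True then show ?thesis using \<open>r \<in> S\<close> eq by (simp add: psi_in_S)
      next
        case False then show ?thesis using mixed[OF \<open>r \<in> S\<close> r(2) False] eq by simp
      qed
    next
      case False
      show ?thesis
      proof (cases "r' \<in> S")
        case True then show ?thesis using mixed[OF True r(1) False] eq by simp
      next
        case False':False
        consider "r < r'" | "r = r'" | "r' < r" by linarith
        then show ?thesis
          by cases (use nn[OF r(1) r(2) _ False False'] nn[OF r(2) r(1) _ False' False] eq in auto)
      qed
    qed
  qed
qed

lemma psi_valid:
  assumes g: "good m j S"
  shows "valid m (j+m+1) (psi m (j+m+1) S) \<and> Phi m (j+m+1) (psi m (j+m+1) S) = S"
proof -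
  let ?N = "j+m+1" and ?p = "psi m (j+m+1) S"
  have S: "S \<subseteq> {1..j+1}" using g by (auto simp: good_def)
  have img: "?p ` {1..?N} \<subseteq> {1..?N}"
  proof
    fix c assume "c \<in> ?p ` {1..?N}"
    then obtain r where r: "r \<in> {1..?N}" "c = ?p r" by auto
    show "c \<in> {1..?N}"
    proof (cases "r \<in> S")
      case True then show ?thesis using r S psi_in_S by fastforce
    next
      case False then show ?thesis using psi_down[OF g r(1) False] psi_ge1[OF g r(1) False] r by auto
    qed
  qed
  have inj: "inj_on ?p {1..?N}" using psi_inj[OF g] .
  have bij: "bij_betw ?p {1..?N} {1..?N}"
    unfolding bij_betw_def using inj endo_inj_surj[OF _ img inj] by simp
  have perm: "?p permutes {1..?N}"
    by (rule bij_imp_permutes[OF bij]) (use psi_out[OF _ g] in auto)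
  have disp: "\<forall>i\<in>{1..?N}. int (?p i) - int i \<in> {-2, -1, int m}"
  proof
    fix i assume i: "i \<in> {1..?N}"
    show "int (?p i) - int i \<in> {-2, -1, int m}"
    proof (cases "i \<in> S")
      case True then show ?thesis by (simp add: psi_in_S)
    next
      case False then show ?thesis using psi_down[OF g i False] by auto
    qed
  qed
  have ph: "Phi m ?N ?p = S"
  proof
    show "Phi m ?N ?p \<subseteq> S"
    proof
      fix i assume "i \<in> Phi m ?N ?p"
      then have i: "i \<in> {1..?N}" "?p i = i + m" by (auto simp: Phi_def)
      show "i \<in> S"
      proof (rule ccontr)
        assume "i \<notin> S"
        then show False using psi_down[OF g i(1)] i(2) by auto
      qed
    qed
    show "S \<subseteq> Phi m ?N ?p" using S by (auto simp: Phi_def psi_in_S)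
  qed
  show ?thesis using perm disp ph by (simp add: valid_def)
qed

lemma P_R: "perm_count {-2, -1, int m} (j+m+1) = R m j 1"
proof -
  let ?N = "j+m+1"
  have "perm_count {-2, -1, int m} ?N = card {\<pi>. valid m ?N \<pi>}"
    unfolding perm_count_def valid_def by simp
  also have "\<dots> = card {S. good m j S}"
  proof (rule bij_betw_same_card[of "Phi m ?N"])
    show "bij_betw (Phi m ?N) {\<pi>. valid m ?N \<pi>} {S. good m j S}"
      unfolding bij_betw_def
    proof
      show "inj_on (Phi m ?N) {\<pi>. valid m ?N \<pi>}"
        by (rule inj_onI) (use valid_unique in auto)
      show "Phi m ?N ` {\<pi>. valid m ?N \<pi>} = {S. good m j S}"
      proof
        show "Phi m ?N ` {\<pi>. valid m ?N \<pi>} \<subseteq> {S. good m j S}" using valid_good by auto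
        show "{S. good m j S} \<subseteq> Phi m ?N ` {\<pi>. valid m ?N \<pi>}"
        proof
          fix S assume "S \<in> {S. good m j S}"
          then have "valid m ?N (psi m ?N S) \<and> Phi m ?N (psi m ?N S) = S" using psi_valid by auto
          then show "S \<in> Phi m ?N ` {\<pi>. valid m ?N \<pi>}" by (metis (mono_tags, lifting) image_eqI mem_Collect_eq)
        qed
      qed
    qed
  qed
  also have "{S. good m j S} = {S. goodt m j 1 S}"
    by (auto simp: goodt_def good_def)
  also have "card \<dots> = R m j 1" by (rule goodt_card) auto
  finally show ?thesis .
qed



lemma inner: "(\<Sum>i=0..k. int (perm_count {-2, -1, int m} (k+m+1-i)) * int (s_seq 1 (m+2) i)^2)
   = int (ss m k) * int (ss m (k+m+1))"
proof -
  have "(\<Sum>i=0..k. int (perm_count {-2, -1, int m} (k+m+1-i)) * int (s_seq 1 (m+2) i)^2)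
     = (\<Sum>i=0..k. int (R m (k-i) 1 * ss m i ^2))"
  proof (rule sum.cong, simp)
    fix i assume "i \<in> {0..k}"
    then have "k+m+1-i = (k-i)+m+1" by auto
    then have e: "perm_count {-2, -1, int m} (k+m+1-i) = R m (k-i) 1" using P_R[of m "k-i"] by simp
    show "int (perm_count {-2, -1, int m} (k+m+1-i)) * int (s_seq 1 (m+2) i)^2 = int (R m (k-i) 1 * ss m i ^2)"
      unfolding ss_def[symmetric] e by simp
  qed
  also have "\<dots> = int (\<Sum>i=0..k. R m (k-i) 1 * ss m i ^2)" by simp
  also have "(\<Sum>i=0..k. R m (k-i) 1 * ss m i ^2) = (\<Sum>j=0..k. R m j 1 * ss m (k-j) ^2)"
    by (intro sum.reindex_bij_witness[where i="\<lambda>j. k - j" and j="\<lambda>j. k - j"]) auto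
  also have "\<dots> = ss m k * ss m (k + (m+2-1))" by (rule R_conv) auto
  finally show ?thesis by simp
qed

theorem mainTheorem7:
  fixes m n :: nat
  shows "int (s_seq 1 (m+2) (n+m+2))^2 - 1 =
    (\<Sum>k=0..n. int (s_seq 1 (m+2) k)^2
       + 2 * (\<Sum>i=0..k. int (perm_count {-2, -1, int m} (k+m+1-i)) * int (s_seq 1 (m+2) i)^2))"
proof -
  have step: "int (ss m (k+m+2))^2 - int (ss m (k+m+1))^2 = int (ss m k)^2 + 2 * (int (ss m k) * int (ss m (k+m+1)))" for k
  proof -
    have "ss m (k+m+2) = ss m (k+m+1) + ss m k"
      using s_step[of "k+m+2" m] by simp
    then show ?thesis by (simp add: power2_eq_square algebra_simps)
  qed
  have "int (ss m (n+m+2))^2 - 1 = (\<Sum>k=0..n. int (ss m k)^2 + 2 * (int (ss m k) * int (ss m (k+m+1))))"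
  proof (induction n)
    case 0
    have "ss m (m+1) = 1" by (rule s_small) simp
    then show ?case using step[of 0] by simp
  next
    case (Suc n)
    have "int (ss m (Suc n+m+2))^2 - 1 = (int (ss m (Suc n+m+2))^2 - int (ss m (Suc n+m+1))^2) + (int (ss m (n+m+2))^2 - 1)"
      by simp
    then show ?case using Suc step[of "Suc n"] by simp
  qed
  then show ?thesis unfolding ss_def[symmetric] inner[unfolded ss_def[symmetric]] by simp
qed


end
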